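(* Let $L, L' \subset \mathbb{S}^2$ be two non-crossing loops and let $i, i' \in \{0,1\}$. Then at least one of the following holds: $$\Delta_L^{i} \subseteq \Delta_{L'}^{i'}, \qquad \Delta_{L'}^{i'} \subseteq \Delta_L^{i}, \qquad \Delta_L^{i} \cap \Delta_{L'}^{i'} \subseteq L \cap L', \qquad \Delta_L^{i} \cup \Delta_{L'}^{i'} = \mathbb{S}^2 .$$
   Context: $\mathbb{S}^2$ is the unit $2$-sphere. A loop is a subset of $\mathbb{S}^2$ homeomorphic to the circle $\mathbb{S}^1$. A loop $L$ divides $\mathbb{S}^2$ into two closed regions, denoted $\Delta_L^0$ and $\Delta_L^1$, each homeomorphic to a closed disk, with $\Delta_L^0 \cap \Delta_L^1 = L$. Two loops $L, L'$ are non-crossing if $L \subseteq \Delta_{L'}^0$ or $L \subseteq \Delta_{L'}^1$. *)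

theory Defs
  imports "HOL-Analysis.Analysis"
begin

definition S2 :: "(real^3) set" where
  "S2 = sphere 0 1"

definition is_loop :: "(real^3) set \<Rightarrow> bool" where
  "is_loop L \<longleftrightarrow> L \<subseteq> S2 \<and> L homeomorphic (sphere (0::real^2) 1)"

text \<open>The closed regions Delta_L^0, Delta_L^1 determined by a loop L: the closures of
  the connected components of S2 - L (by the Jordan curve theorem there are exactly two).\<close>
definition regions :: "(real^3) set \<Rightarrow> (real^3) set set" where
  "regions L = {closure C | C. C \<in> components (S2 - L)}"

definition non_crossing :: "(real^3) set \<Rightarrow> (real^3) set \<Rightarrow> bool" where
  "non_crossing L L' \<longleftrightarrow> (\<exists>D'\<in>regions L'. L \<subseteq> D')"

end

theory Submission
  imports Defs "HOL-Complex_Analysis.Complex_Analysis"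
begin


lemma Jordan_set:
  fixes K :: "complex set"
  assumes "K homeomorphic (sphere (0::real^2) 1)"
  obtains inner outer where
                "inner \<noteq> {}" "open inner" "connected inner"
                "outer \<noteq> {}" "open outer" "connected outer"
                "bounded inner" "\<not> bounded outer" "inner \<inter> outer = {}"
                "inner \<union> outer = - K"
                "frontier inner = K"
                "frontier outer = K"
proof -
  have "sphere (0::complex) 1 homeomorphic K"
  proof -
    have "sphere (0::complex) 1 homeomorphic sphere (0::real^2) 1"
      by (rule homeomorphic_spheres_gen) auto
    then show ?thesis using assms homeomorphic_sym homeomorphic_trans by metis
  qed
  then obtain f g where hom: "homeomorphism (sphere (0::complex) 1) K f g"
    by (auto simp: homeomorphic_def)
  define c where "c = f \<circ> circlepath 0 1"
  have pi: "path_image (circlepath 0 1) = sphere (0::complex) 1"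
    by (simp add: path_image_circlepath)
  have sp: "simple_path c"
    unfolding c_def
    apply (rule simple_path_continuous_image)
    using hom pi by (auto simp: simple_path_circlepath homeomorphism_def intro: inj_on_inverseI)
  have loop: "pathfinish c = pathstart c"
    by (simp add: c_def pathfinish_compose pathstart_compose)
  have pc: "path_image c = K"
    using hom pi by (simp add: c_def path_image_compose homeomorphism_def)
  show ?thesis
    using Jordan_curve[OF sp loop] pc that by metis
qed




lemma punct:
  assumes "p \<in> S2"
  obtains h g where "homeomorphism (S2 - {p}) (UNIV::complex set) h g"
proof -
  have c: "axis 3 (1::real) \<noteq> (0::real^3)" by (simp add: axis_eq_0_iff)
  have p: "p \<in> sphere (0::real^3) 1" using assms by (simp add: S2_def)
  have 1: "S2 - {p} homeomorphic {x::real^3. axis 3 1 \<bullet> x = 0}"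
    unfolding S2_def
    using homeomorphic_punctured_sphere_hyperplane[OF _ p c, of 0] by simp
  have 2: "{x::real^3. axis 3 1 \<bullet> x = 0} homeomorphic (UNIV::complex set)"
    using c by (simp add: homeomorphic_affine_sets_eq affine_hyperplane aff_dim_hyperplane)
  show ?thesis using homeomorphic_trans[OF 1 2] that by (auto simp: homeomorphic_def)
qed

lemma notS2:
  assumes "L homeomorphic (sphere (0::real^2) 1)" 
  shows "L \<noteq> S2"
proof
  assume "L = S2"
  then obtain f g where "homeomorphism (sphere (0::real^3) 1) (sphere (0::real^2) 1) f g"
    using assms by (auto simp: S2_def homeomorphic_def)
  then have c1: "continuous_on (sphere (0::real^3) 1) f" "inj_on f (sphere (0::real^3) 1)"
    by (auto simp: homeomorphism_def intro: inj_on_inverseI)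
  have "DIM(real^3) \<le> DIM(real^2)" by (rule no_embedding_sphere_lowdim[OF c1]) simp
  then show False by simp
qed

lemma p_closure:
  assumes "homeomorphism (S2 - {p}) (UNIV::complex set) h g" "p \<in> S2"
  shows "p \<in> closure (S2 - {p})"
proof (rule ccontr)
  assume "p \<notin> closure (S2 - {p})"
  moreover have "closure (S2 - {p}) \<subseteq> S2"
    unfolding S2_def by (meson Diff_subset closed_sphere closure_minimal)
  ultimately have "closure (S2 - {p}) \<subseteq> S2 - {p}" by blast
  then have "closure (S2 - {p}) = S2 - {p}" using closure_subset by (rule antisym)
  then have cl: "closed (S2 - {p})" by (metis closed_closure)
  have "bounded (S2 - {p})" unfolding S2_def by (meson bounded_sphere bounded_subset Diff_subset)
  with cl have "compact (S2 - {p})" by (simp add: compact_eq_bounded_closed)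
  then have "compact (UNIV::complex set)"
    using assms(1) homeomorphic_compactness homeomorphic_def by blast
  then show False
    using compact_imp_bounded not_bounded_UNIV by blast
qed



lemma connected_sep:
  assumes "connected C" "C \<subseteq> A \<union> V" "closure A \<inter> V = {}" "A \<inter> closure V = {}"
  shows "C \<subseteq> A \<or> C \<subseteq> V"
proof (rule ccontr)
  assume n: "\<not> (C \<subseteq> A \<or> C \<subseteq> V)"
  have o1: "open (- closure V)" and o2: "open (- closure A)" by auto
  have "C \<subseteq> (- closure V) \<union> (- closure A)" using assms(2-4) by blast
  moreover have "(- closure V) \<inter> (- closure A) \<inter> C = {}"
    using assms(2) closure_subset[of A] closure_subset[of V] by blast
  moreover have "(- closure V) \<inter> C \<noteq> {}"
    using n assms(2-4) closure_subset[of A] closure_subset[of V] by blast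
  moreover have "(- closure A) \<inter> C \<noteq> {}"
    using n assms(2-4) closure_subset[of A] closure_subset[of V] by blast
  ultimately show False using assms(1) o1 o2 unfolding connected_def by blast
qed

lemma components_two:
  assumes "S = A \<union> V" "connected A" "connected V" "A \<noteq> {}" "V \<noteq> {}"
    "closure A \<inter> V = {}" "A \<inter> closure V = {}"
  shows "components S = {A, V}"
proof -
  have disj: "A \<inter> V = {}" using assms(6) closure_subset by blast
  have comp: "X \<in> components S" if "X = A \<or> X = V" for X
  proof -
    have "X \<subseteq> S" "X \<noteq> {}" "connected X" using that assms by auto
    then have "S \<noteq> {}" by blast
    then obtain C where C: "C \<in> components S" "X \<subseteq> C"
      using exists_component_superset \<open>X \<subseteq> S\<close> \<open>connected X\<close> by metis
    then have "connected C" "C \<subseteq> S" using C(1) in_components_connected in_components_subset by blast+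
    then have "C \<subseteq> A \<or> C \<subseteq> V" using connected_sep assms by metis
    then have "C = X" using C that disj assms(4,5) by blast
    then show ?thesis using C by simp
  qed
  have bk: "C = A \<or> C = V" if C: "C \<in> components S" for C
  proof -
    have "connected C" "C \<subseteq> S" "C \<noteq> {}" using C in_components_connected in_components_subset in_components_nonempty by blast+
    then have "C \<subseteq> A \<or> C \<subseteq> V" using connected_sep assms by metis
    then show ?thesis
    proof
      assume "C \<subseteq> A"
      then have "A \<subseteq> C" using components_maximal[OF C assms(2)] assms(1) \<open>C \<noteq> {}\<close> by blast
      then show ?thesis using \<open>C \<subseteq> A\<close> by blast
    next
      assume "C \<subseteq> V"
      then have "V \<subseteq> C" using components_maximal[OF C assms(3)] assms(1) \<open>C \<noteq> {}\<close> by blast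
      then show ?thesis using \<open>C \<subseteq> V\<close> by blast
    qed
  qed
  show ?thesis using comp bk by blast
qed



lemma closed_S2: "closed S2" by (simp add: S2_def)

lemma jordan_S2:
  assumes LS: "L \<subseteq> S2" and Lh: "L homeomorphic sphere (0::real^2) 1"
  obtains U V where "components (S2 - L) = {U, V}" "U \<inter> V = {}" "U \<union> V = S2 - L"
    "closure U = U \<union> L" "closure V = V \<union> L"
proof -
  obtain p where p: "p \<in> S2" "p \<notin> L" using notS2[OF Lh] LS by blast
  obtain h g where hom: "homeomorphism (S2 - {p}) (UNIV::complex set) h g"
    using punct[OF p(1)] by blast
  have gh: "\<And>x. x \<in> S2 - {p} \<Longrightarrow> g (h x) = x" and hg: "\<And>y. h (g y) = y"
    and gim: "g ` UNIV = S2 - {p}" and him: "h ` (S2 - {p}) = UNIV"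
    and contg: "continuous_on UNIV g" and conth: "continuous_on (S2 - {p}) h"
    using hom by (auto simp: homeomorphism_def)
  have injg: "inj g" by (metis hg injI)
  define K where "K = h ` L"
  have LS': "L \<subseteq> S2 - {p}" using LS p by blast
  have "homeomorphism L K h g"
    using homeomorphism_of_subsets[OF hom LS' subset_UNIV] K_def by simp
  then have "L homeomorphic K" by (auto simp: homeomorphic_def)
  then have "K homeomorphic sphere (0::real^2) 1"
    using Lh homeomorphic_sym homeomorphic_trans by metis
  then obtain inner outer where J:
                "inner \<noteq> {}" "open inner" "connected inner"
                "outer \<noteq> {}" "open outer" "connected outer"
                "bounded inner" "\<not> bounded outer" "inner \<inter> outer = {}"
                "inner \<union> outer = - K"
                "frontier inner = K"
                "frontier outer = K"
    by (rule Jordan_set)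
  have "g ` h ` L = (\<lambda>x. x) ` L" unfolding image_image
    by (rule image_cong) (use gh LS' in auto)
  then have gK: "g ` K = L" unfolding K_def by simp
  define A where "A = g ` inner"
  define B where "B = g ` outer"
  have UNIVeq: "inner \<union> outer \<union> K = UNIV" using J(10) by blast
  have cover: "A \<union> B \<union> L = S2 - {p}"
  proof -
    have "A \<union> B \<union> L = g ` (inner \<union> outer \<union> K)" by (simp add: A_def B_def image_Un gK)
    then show ?thesis using UNIVeq gim by simp
  qed
  have iK: "inner \<inter> K = {}" "outer \<inter> K = {}" using J(10) by blast+
  have dAB: "A \<inter> B = {}"
  proof -
    have "A \<inter> B = g ` (inner \<inter> outer)" by (simp add: A_def B_def image_Int[OF injg])
    then show ?thesis using J(9) by simp
  qed
  have dAL: "A \<inter> L = {}"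
  proof -
    have "A \<inter> L = g ` (inner \<inter> K)" by (simp add: A_def gK[symmetric] image_Int[OF injg])
    then show ?thesis using iK by simp
  qed
  have dBL: "B \<inter> L = {}"
  proof -
    have "B \<inter> L = g ` (outer \<inter> K)" by (simp add: B_def gK[symmetric] image_Int[OF injg])
    then show ?thesis using iK by simp
  qed
  have ci: "closure inner = inner \<union> K" using J(11) by (simp add: closure_Un_frontier)
  have co: "closure outer = outer \<union> K" using J(12) by (simp add: closure_Un_frontier)
  have clA: "closure A = A \<union> L"
  proof
    have "compact (closure inner)" using J(7) by (simp add: compact_closure)
    then have "compact (g ` closure inner)"
      using contg compact_continuous_image continuous_on_subset subset_UNIV by metis
    moreover have "g ` closure inner = A \<union> L" using ci gK A_def by (simp add: image_Un)
    ultimately have "closed (A \<union> L)" by (metis compact_imp_closed)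
    then show "closure A \<subseteq> A \<union> L" by (simp add: closure_minimal)
    have "g ` closure inner \<subseteq> closure A"
      by (rule image_closure_subset[OF continuous_on_subset[OF contg subset_UNIV] closed_closure])
         (simp add: A_def closure_subset)
    then show "A \<union> L \<subseteq> closure A" using \<open>g ` closure inner = A \<union> L\<close> by simp
  qed
  have BLcl: "B \<union> L \<subseteq> closure B"
  proof -
    have "g ` closure outer \<subseteq> closure B"
      by (rule image_closure_subset[OF continuous_on_subset[OF contg subset_UNIV] closed_closure])
         (simp add: B_def closure_subset)
    moreover have "g ` closure outer = B \<union> L" using co gK B_def by (simp add: image_Un)
    ultimately show ?thesis by simp
  qed
  have "openin (top_of_set (S2 - {p})) A"
    unfolding A_def
    by (rule homeomorphism_imp_open_map[OF homeomorphism_symD[OF hom]]) (use J(2) in simp)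
  moreover have "openin (top_of_set S2) (S2 - {p})"
    by (simp add: openin_delete)
  ultimately have "openin (top_of_set S2) A" using openin_trans by blast
  then obtain W where O: "open W" "A = S2 \<inter> W" by (auto simp: openin_open)
  have BS: "B \<subseteq> S2" using cover by blast
  have "W \<inter> B = {}" using O dAB BS by blast
  then have "W \<inter> closure B = {}" using O(1) open_Int_closure_eq_empty by blast
  moreover have "closure B \<subseteq> S2" using BS closed_S2 closure_minimal by blast
  ultimately have clBA: "closure B \<inter> A = {}" using O by blast
  have cLL: "closure L = L"
  proof -
    have "compact L" using Lh homeomorphic_compactness compact_sphere by blast
    then show ?thesis by (simp add: compact_imp_closed)
  qed
  have "p \<in> closure (S2 - {p})" by (rule p_closure[OF hom p(1)])
  then have "p \<in> closure A \<union> closure B \<union> closure L" using cover[symmetric] by (simp add: closure_Un)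
  then have pB: "p \<in> closure B" using clA cLL p(2) cover by blast
  have clB: "closure B = B \<union> L \<union> {p}"
  proof
    show "B \<union> L \<union> {p} \<subseteq> closure B" using BLcl pB by blast
    show "closure B \<subseteq> B \<union> L \<union> {p}"
      using clBA \<open>closure B \<subseteq> S2\<close> cover by blast
  qed
  define V where "V = B \<union> {p}"
  have clV: "closure V = V \<union> L" unfolding V_def using clB by (simp add: closure_insert)
  have cA: "connected A" unfolding A_def
    using J(3) contg connected_continuous_image continuous_on_subset subset_UNIV by metis
  have cB: "connected B" unfolding B_def
    using J(6) contg connected_continuous_image continuous_on_subset subset_UNIV by metis
  have cV: "connected V"
    by (rule connected_intermediate_closure[OF cB]) (use clB V_def in auto)
  have SL: "S2 - L = A \<union> V" using cover p V_def dAL dBL by blast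
  have comps: "components (S2 - L) = {A, V}"
  proof (rule components_two[OF SL cA cV])
    have pA: "p \<notin> A" "p \<notin> B" using cover by blast+
    show "A \<noteq> {}" using J(1) A_def by simp
    show "V \<noteq> {}" using V_def by simp
    show "closure A \<inter> V = {}" using clA V_def dAB dAL pA p(2) dBL by blast
    show "A \<inter> closure V = {}" using clV V_def dAB dAL pA by blast
  qed
  show ?thesis
    by (rule that[OF comps]) (use V_def dAB p cover SL clA clV in auto)
qed


lemma core:
  assumes P: "U \<inter> V = {}" "U \<union> V = S2 - L" "closure U = U \<union> L" "closure V = V \<union> L"
     "components (S2 - L) = {U, V}" "L \<subseteq> S2"
  and P': "U' \<inter> V' = {}" "U' \<union> V' = S2 - L'" "closure U' = U' \<union> L'" "closure V' = V' \<union> L'"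
     "components (S2 - L') = {U', V'}" "L' \<subseteq> S2"
  and nc: "L \<inter> V' = {} \<or> L \<inter> U' = {}"
  shows "closure U \<subseteq> closure U' \<or> closure U' \<subseteq> closure U \<or>
         closure U \<inter> closure U' \<subseteq> L \<inter> L' \<or> closure U \<union> closure U' = S2"
proof -
  have sub: "B' \<subseteq> U \<or> B' \<subseteq> V" if B': "B' \<in> {U', V'}" "L \<inter> B' = {}" for B'
  proof (cases "B' = {}")
    case True then show ?thesis by simp
  next
    case False
    have "connected B'" using B' P'(5) in_components_connected by blast
    moreover have "B' \<subseteq> S2 - L" using B' P'(2) by blast
    ultimately obtain C where C: "C \<in> components (S2 - L)" "B' \<subseteq> C"
      using exists_component_superset False by (metis bot.extremum_uniqueI)
    then show ?thesis using P(5) by blast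
  qed
  have mV: "closure V' \<subseteq> closure V" if "V' \<subseteq> V" using that closure_mono by blast
  have L'V': "L' \<subseteq> closure V'" "L' \<subseteq> closure U'" using P'(3,4) by blast+
  from nc show ?thesis
  proof
    assume h: "L \<inter> V' = {}"
    from sub[OF _ h] have "V' \<subseteq> U \<or> V' \<subseteq> V" by blast
    then show ?thesis
    proof
      assume "V' \<subseteq> V"
      then have "closure V' \<subseteq> closure V" by (rule closure_mono)
      then have "U \<subseteq> U'" using P(1,2,4) P'(2,6) L'V'(1) \<open>V' \<subseteq> V\<close> by blast
      moreover have "L \<subseteq> U' \<union> L'" using P(6) P'(2) h by blast
      ultimately have "closure U \<subseteq> closure U'" using P(3) P'(3) by blast
      then show ?thesis by blast
    next
      assume "V' \<subseteq> U"
      then have "closure V' \<subseteq> closure U" by (rule closure_mono)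
      moreover have "closure U' \<union> closure V' = S2" using P'(2,3,4,6) by blast
      moreover have "closure U \<subseteq> S2" using P(2,3,6) by blast
      moreover have "closure U' \<subseteq> S2" using P'(2,3,6) by blast
      ultimately have "closure U \<union> closure U' = S2" by blast
      then show ?thesis by blast
    qed
  next
    assume h: "L \<inter> U' = {}"
    from sub[OF _ h] have "U' \<subseteq> U \<or> U' \<subseteq> V" by blast
    then show ?thesis
    proof
      assume "U' \<subseteq> U"
      then have "closure U' \<subseteq> closure U" by (rule closure_mono)
      then show ?thesis by blast
    next
      assume "U' \<subseteq> V"
      then have "closure U' \<subseteq> closure V" by (rule closure_mono)
      then have "U \<inter> L' = {}" using P(1,2,4) L'V'(2) by blast
      moreover have "U \<inter> U' = {}" using P(1) \<open>U' \<subseteq> V\<close> by blast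
      ultimately have "closure U \<inter> closure U' \<subseteq> L \<inter> L'" using P(3) P'(3) h by blast
      then show ?thesis by blast
    qed
  qed
qed

theorem mainTheorem1:
  fixes L L' :: "(real^3) set" and D D' :: "(real^3) set"
  assumes "is_loop L" and "is_loop L'"
    and "non_crossing L L'"
    and "D \<in> regions L" and "D' \<in> regions L'"
  shows "D \<subseteq> D' \<or> D' \<subseteq> D \<or> D \<inter> D' \<subseteq> L \<inter> L' \<or> D \<union> D' = S2"
proof -
  have L: "L \<subseteq> S2" "L homeomorphic sphere (0::real^2) 1" using assms(1) by (auto simp: is_loop_def)
  have L': "L' \<subseteq> S2" "L' homeomorphic sphere (0::real^2) 1" using assms(2) by (auto simp: is_loop_def)
  obtain U V where P: "components (S2 - L) = {U, V}" "U \<inter> V = {}" "U \<union> V = S2 - L"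
    "closure U = U \<union> L" "closure V = V \<union> L" by (rule jordan_S2[OF L])
  obtain U' V' where P': "components (S2 - L') = {U', V'}" "U' \<inter> V' = {}" "U' \<union> V' = S2 - L'"
    "closure U' = U' \<union> L'" "closure V' = V' \<union> L'" by (rule jordan_S2[OF L'])
  obtain C where C: "C \<in> {U, V}" "D = closure C"
  proof -
    obtain C0 where "D = closure C0" "C0 \<in> components (S2 - L)" using assms(4) unfolding regions_def by blast
    then show ?thesis using that P(1) by blast
  qed
  obtain C' where C': "C' \<in> {U', V'}" "D' = closure C'"
  proof -
    obtain C0 where "D' = closure C0" "C0 \<in> components (S2 - L')" using assms(5) unfolding regions_def by blast
    then show ?thesis using that P'(1) by blast
  qed
  obtain E' where E': "E' \<in> {U', V'}" "L \<subseteq> closure E'"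
  proof -
    obtain D0 where D0: "D0 \<in> regions L'" "L \<subseteq> D0" using assms(3) unfolding non_crossing_def by blast
    obtain C0 where "D0 = closure C0" "C0 \<in> components (S2 - L')" using D0(1) unfolding regions_def by blast
    then show ?thesis using that P'(1) D0(2) by blast
  qed
  have nc: "L \<inter> V' = {} \<or> L \<inter> U' = {}"
  proof (cases "E' = U'")
    case True
    then have "L \<subseteq> U' \<union> L'" using E'(2) P'(4) by simp
    then show ?thesis using P'(2,3) by blast
  next
    case False
    then have "E' = V'" using E'(1) by blast
    then have "L \<subseteq> V' \<union> L'" using E'(2) P'(5) by simp
    then show ?thesis using P'(2,3) by blast
  qed
  have nc2: "L \<inter> U' = {} \<or> L \<inter> V' = {}" using nc by blast
  have Pa: "U \<inter> V = {}" "U \<union> V = S2 - L" "closure U = U \<union> L" "closure V = V \<union> L"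
     "components (S2 - L) = {U, V}" "L \<subseteq> S2" using P L by blast+
  have Pb: "V \<inter> U = {}" "V \<union> U = S2 - L" "closure V = V \<union> L" "closure U = U \<union> L"
     "components (S2 - L) = {V, U}" "L \<subseteq> S2" using P L by blast+
  have Pa': "U' \<inter> V' = {}" "U' \<union> V' = S2 - L'" "closure U' = U' \<union> L'" "closure V' = V' \<union> L'"
     "components (S2 - L') = {U', V'}" "L' \<subseteq> S2" using P' L' by blast+
  have Pb': "V' \<inter> U' = {}" "V' \<union> U' = S2 - L'" "closure V' = V' \<union> L'" "closure U' = U' \<union> L'"
     "components (S2 - L') = {V', U'}" "L' \<subseteq> S2" using P' L' by blast+
  note r1 = core[OF Pa Pa' nc] and r2 = core[OF Pa Pb' nc2] and r3 = core[OF Pb Pa' nc]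
    and r4 = core[OF Pb Pb' nc2]
  show ?thesis using C C' r1 r2 r3 r4 by blast
qed

end
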